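(* Let $n=p'q$ where $p',q$ are distinct primes both at least $7$, and let $A=L(n;p')$. Let $S=(x_1,x_2,x_3)$ be an $A$-extremal sequence for the Davenport constant in $\mathbb{Z}_n$. Then $S$ is equivalent with respect to $A$ to a sequence $(y_1,y_2,y_3)$ for which one of the following holds: (i) $y_1$ is the only term divisible by $q$, $y_1\neq 0$, and the image of $(y_2,y_3)$ under the natural map $\mathbb{Z}_n\to\mathbb{Z}_q$ is a $Q_q$-extremal sequence for the Davenport constant; (ii) $y_1$ is the only term coprime to $p'$, and the image of $(y_2,y_3)$ under the natural map $\mathbb{Z}_n\to\mathbb{Z}_q$ is a $Q_q$-extremal sequence for the Davenport constant.
   Context: $\mathbb{Z}_m$ is the integers mod $m$, $U(m)$ its unit group; for a prime $q$, $Q_q=\{x^2: x\in U(q)\}$. For nonempty $A\subseteq\mathbb{Z}_m\setminus\{0\}$, a sequence $(x_1,\ldots,x_k)$ is an $A$-weighted zero-sum sequence if $\sum a_ix_i=0$ for some $a_i\in A$; $D_A(m)$ is the least $k$ such that every length-$k$ sequence in $\mathbb{Z}_m$ has a nonempty $A$-weighted zero-sum subsequence; an $A$-extremal sequence for the Davenport constant is a sequence of length $D_A(m)-1$ with no $A$-weighted zero-sum subsequence. For a multiplicative group $A$, $(x_1,\ldots,x_k)$ and $(y_1,\ldots,y_k)$ are equivalent with respect to $A$ if there are $a_i\in A$, a unit $c$ and a permutation $\sigma$ with $y_{\sigma(i)}=c\,a_ix_i$ for all $i$. For odd $m=\prod p_i^{r_i}$, prime $p\mid m$ and $a\in U(m)$,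 $\left(\frac{a}{p}\right)$ is the Legendre symbol of the image mod $p$, $\left(\frac{a}{m}\right)=\prod\left(\frac{a}{p_i}\right)^{r_i}$, and $L(m;p')=\{a\in U(m):\left(\frac{a}{m}\right)=\left(\frac{a}{p'}\right)\}$ for a prime $p'\mid m$. *)

theory Defs
  imports "HOL-Number_Theory.Number_Theory"
begin

(* Z_m is represented by the integers {0..<m}; a sequence in Z_m is a list of such integers. *)

definition Zmod :: "int \<Rightarrow> int set" where
  "Zmod m = {0..<m}"

definition units_mod :: "int \<Rightarrow> int set" where
  "units_mod m = {a \<in> {0..<m}. coprime a m}"

definition Qsq :: "int \<Rightarrow> int set" where
  "Qsq q = {(x^2) mod q | x. x \<in> units_mod q}"

definition has_wzs_subseq :: "int \<Rightarrow> int set \<Rightarrow> int list \<Rightarrow> bool" where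
  "has_wzs_subseq m A xs \<longleftrightarrow>
     (\<exists>I a. I \<subseteq> {..<length xs} \<and> I \<noteq> {} \<and> (\<forall>i\<in>I. a i \<in> A) \<and>
            (\<Sum>i\<in>I. a i * xs ! i) mod m = 0)"

definition davenport :: "int \<Rightarrow> int set \<Rightarrow> nat" where
  "davenport m A = (LEAST k. \<forall>xs. length xs = k \<and> set xs \<subseteq> Zmod m \<longrightarrow> has_wzs_subseq m A xs)"

definition extremal :: "int \<Rightarrow> int set \<Rightarrow> int list \<Rightarrow> bool" where
  "extremal m A xs \<longleftrightarrow> set xs \<subseteq> Zmod m \<and> length xs = davenport m A - 1 \<and>
     \<not> has_wzs_subseq m A xs"

definition equiv_wrt :: "int \<Rightarrow> int set \<Rightarrow> int list \<Rightarrow> int list \<Rightarrow> bool" where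
  "equiv_wrt m A xs ys \<longleftrightarrow> length xs = length ys \<and>
     (\<exists>a c \<sigma>. (\<forall>i<length xs. a i \<in> A) \<and> c \<in> units_mod m \<and>
        bij_betw \<sigma> {..<length xs} {..<length xs} \<and>
        (\<forall>i<length xs. ys ! (\<sigma> i) = (c * a i * xs ! i) mod m))"

definition jsym :: "int \<Rightarrow> int \<Rightarrow> int" where
  "jsym a m = (\<Prod>p\<in>prime_factors m. Legendre a p ^ multiplicity p m)"

definition Lset :: "int \<Rightarrow> int \<Rightarrow> int set" where
  "Lset m p' = {a \<in> units_mod m. jsym a m = Legendre a p'}"

end

theory Submission imports Defs begin

definition sqq :: "int \<Rightarrow> int \<Rightarrow> bool" where
  "sqq q b \<longleftrightarrow> (\<exists>s. \<not> q dvd s \<and> [b = s^2] (mod q))"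

lemma jsym_pq:
  fixes p q a :: int assumes "prime p" "prime q" "p \<noteq> q"
  shows "jsym a (p*q) = Legendre a p * Legendre a q"
proof -
  have pf: "prime_factors (p*q) = {p,q}"
    using assms by (auto simp add: prime_factors_product prime_prime_factors)
  have m1: "multiplicity p (p*q) = 1"
    by (metis assms(3) assms(2) assms(1) mult.right_neutral multiplicity_times_same One_nat_def prime_multiplicity_other not_prime_unit not_prime_0)
  have m2: "multiplicity q (p*q) = 1"
    by (metis assms mult.commute mult.right_neutral multiplicity_times_same One_nat_def prime_multiplicity_other not_prime_unit not_prime_0)
  show ?thesis unfolding jsym_def pf using assms m1 m2 by simp
qed

lemma coprime_prime_iff:
  fixes p a :: int assumes "prime p"
  shows "coprime a p \<longleftrightarrow> \<not> p dvd a"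
  by (metis assms coprime_commute prime_imp_coprime dvd_refl coprime_def not_prime_unit)

lemma sqq_ndvd: assumes "prime q" "sqq q b" shows "\<not> q dvd b"
  using assms unfolding sqq_def using cong_dvd_iff prime_dvd_power_int by blast

lemma sqq_mult: assumes "prime q" "sqq q a" "sqq q b" shows "sqq q (a*b)"
proof -
  obtain s t where "\<not> q dvd s" "[a = s^2] (mod q)" "\<not> q dvd t" "[b = t^2] (mod q)"
    using assms unfolding sqq_def by blast
  then have "\<not> q dvd (s*t)" "[a*b = (s*t)^2] (mod q)"
    using assms(1) prime_dvd_mult_iff apply blast
    using \<open>[a = s^2] (mod q)\<close> \<open>[b = t^2] (mod q)\<close> by (metis cong_mult power_mult_distrib)
  then show ?thesis unfolding sqq_def by blast
qed

lemma sqq_sq: "\<not> q dvd s \<Longrightarrow> sqq q (s^2)"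
  unfolding sqq_def by auto

lemma sqq_cong: "sqq q a \<Longrightarrow> [a = b] (mod q) \<Longrightarrow> sqq q b"
  unfolding sqq_def using cong_sym cong_trans by blast

lemma sqq_to_Qsq: assumes "prime q" "sqq q b" shows "b mod q \<in> Qsq q"
proof -
  obtain s where s: "\<not> q dvd s" "[b = s^2] (mod q)" using assms unfolding sqq_def by blast
  have "b mod q = (s mod q)^2 mod q" using s(2) by (simp add: cong_def power_mod)
  moreover have "s mod q \<in> units_mod q"
    unfolding units_mod_def using s(1) assms(1) coprime_prime_iff[of q "s mod q"]
    by (simp add: dvd_mod_iff prime_gt_0_int)
  ultimately show ?thesis unfolding Qsq_def by blast
qed

lemma Qsq_to_sqq: assumes "prime q" "b \<in> Qsq q" shows "sqq q b \<and> 0 \<le> b \<and> b < q"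
proof -
  obtain x where x: "b = x^2 mod q" "x \<in> units_mod q" using assms unfolding Qsq_def by blast
  have "\<not> q dvd x" using x(2) assms(1) coprime_prime_iff unfolding units_mod_def by blast
  moreover have "[b = x^2] (mod q)" using x(1) by (simp add: cong_def)
  ultimately show ?thesis unfolding sqq_def using x(1) assms(1) prime_gt_0_int by auto
qed

lemma Lset_iff:
  fixes p q n a :: int assumes "prime p" "prime q" "p \<noteq> q" "n = p*q"
  shows "a \<in> Lset n p \<longleftrightarrow> 0 \<le> a \<and> a < n \<and> \<not> p dvd a \<and> \<not> q dvd a \<and> QuadRes q a"
proof -
  have cop: "coprime a n \<longleftrightarrow> \<not> p dvd a \<and> \<not> q dvd a"
    using coprime_prime_iff[OF assms(1), of a] coprime_prime_iff[OF assms(2), of a] assms(4) by simp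
  have j: "jsym a n = Legendre a p * Legendre a q" using assms jsym_pq by simp
  show ?thesis
  proof
    assume "a \<in> Lset n p"
    then have a: "0 \<le> a" "a < n" "\<not> p dvd a" "\<not> q dvd a" and e: "Legendre a p * Legendre a q = Legendre a p"
      unfolding Lset_def units_mod_def using cop j by auto
    have "Legendre a p \<noteq> 0" using a(3) unfolding Legendre_def by (simp add: cong_0_iff)
    then have "Legendre a q = 1" using e by simp
    then show "0 \<le> a \<and> a < n \<and> \<not> p dvd a \<and> \<not> q dvd a \<and> QuadRes q a"
      using a unfolding Legendre_def by (auto split: if_splits)
  next
    assume a: "0 \<le> a \<and> a < n \<and> \<not> p dvd a \<and> \<not> q dvd a \<and> QuadRes q a"
    then have "Legendre a q = 1" unfolding Legendre_def by (simp add: cong_0_iff)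
    then show "a \<in> Lset n p" unfolding Lset_def units_mod_def using a cop j by auto
  qed
qed

lemma Lset_sqq:
  fixes p q n a :: int assumes "prime p" "prime q" "p \<noteq> q" "n = p*q" "a \<in> Lset n p"
  shows "sqq q a"
proof -
  have "\<not> q dvd a" "QuadRes q a" using Lset_iff[OF assms(1-4)] assms(5) by auto
  then obtain y where y: "[y^2 = a] (mod q)" unfolding QuadRes_def by blast
  have "\<not> q dvd y"
  proof
    assume "q dvd y"
    then have "q dvd y^2" by (simp add: power2_eq_square)
    then show False using y \<open>\<not> q dvd a\<close> cong_dvd_iff by blast
  qed
  then show ?thesis unfolding sqq_def using y cong_sym by blast
qed

lemma mk_weight:
  fixes p q n :: int assumes "prime p" "prime q" "p \<noteq> q" "n = p*q"
    and "\<not> p dvd \<alpha>" "sqq q \<beta>"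
  shows "\<exists>a \<in> Lset n p. [a = \<alpha>] (mod p) \<and> [a = \<beta>] (mod q)"
proof -
  have cpq: "coprime p q" using assms by (simp add: primes_coprime)
  obtain x where x: "[x = \<alpha>] (mod p)" "[x = \<beta>] (mod q)"
    using binary_chinese_remainder_int[OF cpq] by blast
  define a where "a = x mod n"
  have np: "n > 0" using assms prime_gt_0_int by simp
  have ap: "[a = \<alpha>] (mod p)" using x(1) unfolding a_def cong_def assms(4) by (simp add: mod_mod_cancel)
  have aq: "[a = \<beta>] (mod q)" using x(2) unfolding a_def cong_def assms(4)
    by (metis dvd_triv_right mod_mod_cancel)
  obtain s where s: "\<not> q dvd s" "[\<beta> = s^2] (mod q)" using assms(6) unfolding sqq_def by blast
  have "\<not> q dvd \<beta>" using sqq_ndvd assms by blast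
  then have "\<not> q dvd a" using aq cong_dvd_iff by blast
  moreover have "\<not> p dvd a" using ap assms(5) cong_dvd_iff by blast
  moreover have "QuadRes q a" unfolding QuadRes_def using aq s(2) cong_sym cong_trans by blast
  moreover have "0 \<le> a" "a < n" using np unfolding a_def by auto
  ultimately have "a \<in> Lset n p" using Lset_iff[OF assms(1-4)] by blast
  then show ?thesis using ap aq by blast
qed

lemma combine:
  fixes p q n :: int and xs :: "int list" and J :: "nat set"
  assumes "prime p" "prime q" "p \<noteq> q" "n = p*q"
    and "J \<subseteq> {..<length xs}" "J \<noteq> {}"
    and "\<forall>i\<in>J. \<not> p dvd \<alpha> i" "\<forall>i\<in>J. sqq q (\<beta> i)"
    and "p dvd (\<Sum>i\<in>J. \<alpha> i * xs!i)" "q dvd (\<Sum>i\<in>J. \<beta> i * xs!i)"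
  shows "has_wzs_subseq n (Lset n p) xs"
proof -
  have "\<forall>i\<in>J. \<exists>a. a \<in> Lset n p \<and> [a = \<alpha> i] (mod p) \<and> [a = \<beta> i] (mod q)"
    using mk_weight[OF assms(1-4)] assms(7,8) by blast
  from bchoice[OF this] obtain a where a: "\<forall>i\<in>J. a i \<in> Lset n p \<and> [a i = \<alpha> i] (mod p) \<and> [a i = \<beta> i] (mod q)"
    by blast
  have "[(\<Sum>i\<in>J. a i * xs!i) = (\<Sum>i\<in>J. \<alpha> i * xs!i)] (mod p)"
    by (rule cong_sum) (use a in \<open>auto intro: cong_mult\<close>)
  then have dp: "p dvd (\<Sum>i\<in>J. a i * xs!i)" using assms(9) cong_dvd_iff by blast
  have "[(\<Sum>i\<in>J. a i * xs!i) = (\<Sum>i\<in>J. \<beta> i * xs!i)] (mod q)"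
    by (rule cong_sum) (use a in \<open>auto intro: cong_mult\<close>)
  then have dq: "q dvd (\<Sum>i\<in>J. a i * xs!i)" using assms(10) cong_dvd_iff by blast
  have cpq: "coprime p q" using assms by (simp add: primes_coprime)
  have "n dvd (\<Sum>i\<in>J. a i * xs!i)" using dp dq cpq assms(4) by (simp add: divides_mult)
  then have "(\<Sum>i\<in>J. a i * xs!i) mod n = 0" by simp
  then show ?thesis unfolding has_wzs_subseq_def
    by (intro exI[of _ J] exI[of _ a]) (use assms(5,6) a in blast)
qed


lemma crt_pq:
  fixes p q n :: int assumes "prime p" "prime q" "p \<noteq> q" "n = p*q"
  shows "\<exists>w. 0 \<le> w \<and> w < n \<and> [w = r] (mod p) \<and> [w = s] (mod q)"
proof -
  have cpq: "coprime p q" using assms by (simp add: primes_coprime)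
  obtain x where x: "[x = r] (mod p)" "[x = s] (mod q)"
    using binary_chinese_remainder_int[OF cpq] by blast
  define a where "a = x mod n"
  have np: "n > 0" using assms prime_gt_0_int by simp
  have ap: "[a = r] (mod p)" using x(1) unfolding a_def cong_def assms(4) by (simp add: mod_mod_cancel)
  have aq: "[a = s] (mod q)" using x(2) unfolding a_def cong_def assms(4)
    by (metis dvd_triv_right mod_mod_cancel)
  show ?thesis using ap aq np unfolding a_def by (intro exI[of _ "x mod n"]) auto
qed

lemma prefix_aux:
  fixes m :: int and xs :: "int list"
  assumes "1 \<in> A" "i < j" "j \<le> length xs"
    and "(\<Sum>l<i. xs!l) mod m = (\<Sum>l<j. xs!l) mod m"
  shows "has_wzs_subseq m A xs"
proof -
  have "(\<Sum>l<i. xs!l) + (\<Sum>l\<in>{i..<j}. xs!l) = (\<Sum>l<j. xs!l)"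
    using assms(2) by (simp add: lessThan_atLeast0 sum.atLeastLessThan_concat)
  then have "(\<Sum>l\<in>{i..<j}. xs!l) = (\<Sum>l<j. xs!l) - (\<Sum>l<i. xs!l)" by simp
  moreover have "m dvd (\<Sum>l<j. xs!l) - (\<Sum>l<i. xs!l)"
    using assms(4) by (metis mod_eq_dvd_iff)
  ultimately have "(\<Sum>l\<in>{i..<j}. 1 * xs!l) mod m = 0" by simp
  moreover have "{i..<j} \<subseteq> {..<length xs}" "{i..<j} \<noteq> {}" using assms(2,3) by auto
  ultimately show ?thesis unfolding has_wzs_subseq_def using assms(1)
    by (intro exI[of _ "{i..<j}"] exI[of _ "\<lambda>_. 1"]) auto
qed

lemma prefix_P:
  fixes m :: int
  assumes "m > 0" "1 \<in> A"
  shows "\<forall>xs. length xs = nat m \<and> set xs \<subseteq> Zmod m \<longrightarrow> has_wzs_subseq m A xs"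
proof (intro allI impI)
  fix xs :: "int list" assume xs: "length xs = nat m \<and> set xs \<subseteq> Zmod m"
  define f where "f i = (\<Sum>l<i. xs!l) mod m" for i
  have sub: "f ` {..nat m} \<subseteq> {0..<m}" unfolding f_def using assms(1) by auto
  have "\<not> inj_on f {..nat m}"
  proof
    assume "inj_on f {..nat m}"
    then have "card {..nat m} \<le> card {0..<m}" using card_inj_on_le sub by blast
    then show False using assms(1) by simp
  qed
  then obtain i j where ij: "i \<le> nat m" "j \<le> nat m" "i \<noteq> j" "f i = f j"
    unfolding inj_on_def by auto
  show "has_wzs_subseq m A xs"
  proof (cases "i < j")
    case True
    then show ?thesis using prefix_aux[OF assms(2) True] ij xs unfolding f_def by auto
  next
    case False
    then have "j < i" using ij by simp
    then show ?thesis using prefix_aux[OF assms(2) \<open>j < i\<close>] ij xs unfolding f_def by auto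
  qed
qed

lemma dav_P:
  assumes "\<exists>k. \<forall>xs. length xs = k \<and> set xs \<subseteq> Zmod m \<longrightarrow> has_wzs_subseq m A xs"
  shows "\<forall>xs. length xs = davenport m A \<and> set xs \<subseteq> Zmod m \<longrightarrow> has_wzs_subseq m A xs"
  unfolding davenport_def by (rule LeastI_ex[OF assms])


lemma lift_Q3:
  fixes p q n :: int assumes pr: "prime p" "prime q" "p \<noteq> q" "n = p*q"
    and P4: "\<forall>xs. length xs = 4 \<and> set xs \<subseteq> Zmod n \<longrightarrow> has_wzs_subseq n (Lset n p) xs"
    and zs: "length zs = 3"
  shows "has_wzs_subseq q (Qsq q) zs"
proof -
  have "\<forall>l. \<exists>w. 0 \<le> w \<and> w < n \<and> [w = (if l < 3 then 0 else 1)] (mod p)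
            \<and> [w = (if l < 3 then zs!l else 0)] (mod q)"
    using crt_pq[OF pr(1-4)] by blast
  then have "\<exists>w. \<forall>l. 0 \<le> w l \<and> w l < n \<and> [w l = (if l < 3 then 0 else 1)] (mod p)
            \<and> [w l = (if l < 3 then zs!l else 0)] (mod q)" by (rule choice)
  then obtain w where w: "\<And>l. 0 \<le> w l \<and> w l < n \<and> [w l = (if l < 3 then 0 else 1)] (mod p)
            \<and> [w l = (if l < 3 then zs!l else 0)] (mod q)"
    by blast
  define ws where "ws = map w [0..<4]"
  have lw: "length ws = 4" unfolding ws_def by simp
  have nth: "\<And>l. l < 4 \<Longrightarrow> ws!l = w l" unfolding ws_def by simp
  have "set ws \<subseteq> Zmod n" unfolding ws_def Zmod_def using w by auto
  then have "has_wzs_subseq n (Lset n p) ws" by (rule P4[rule_format, OF conjI[OF lw]])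
  then obtain I a where I0: "I \<subseteq> {..<length ws}" "I \<noteq> {}" "\<forall>i\<in>I. a i \<in> Lset n p"
    "(\<Sum>i\<in>I. a i * ws!i) mod n = 0"
    unfolding has_wzs_subseq_def by (elim exE conjE) (rule that; assumption)
  then have I: "I \<subseteq> {..<4}" "I \<noteq> {}" "\<forall>i\<in>I. a i \<in> Lset n p"
    "(\<Sum>i\<in>I. a i * ws!i) mod n = 0" using lw by auto
  have sumw: "(\<Sum>i\<in>I. a i * ws!i) = (\<Sum>i\<in>I. a i * w i)"
    using I(1) nth by (intro sum.cong) auto
  have nd: "n dvd (\<Sum>i\<in>I. a i * w i)" using I(4) sumw by (simp add: mod_eq_0_iff_dvd)
  have "3 \<notin> I"
  proof
    assume "3 \<in> I"
    have fin: "finite I" using I(1) finite_subset by blast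
    have "(\<Sum>i\<in>I. a i * w i) = a 3 * w 3 + (\<Sum>i\<in>I - {3}. a i * w i)"
      using fin \<open>3 \<in> I\<close> by (simp add: sum.remove)
    moreover have "p dvd (\<Sum>i\<in>I - {3}. a i * w i)"
    proof (rule dvd_sum)
      fix i assume "i \<in> I - {3}"
      then have "i < 3" using I(1) by auto
      then have "[w i = 0] (mod p)" using w[of i] by simp
      then show "p dvd a i * w i" by (simp add: cong_0_iff)
    qed
    moreover have "p dvd (\<Sum>i\<in>I. a i * w i)" using nd pr(4) dvd_mult_left by blast
    ultimately have "p dvd a 3 * w 3" by (simp add: dvd_add_left_iff)
    moreover have "\<not> p dvd w 3"
    proof
      assume "p dvd w 3"
      moreover have "[w 3 = 1] (mod p)" using w[of 3] by simp
      ultimately have "p dvd 1" using cong_dvd_iff by blast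
      then show False using prime_gt_1_int[OF pr(1)] by simp
    qed
    moreover have "\<not> p dvd a 3" using I(3) \<open>3 \<in> I\<close> Lset_iff[OF pr] by blast
    ultimately show False using pr(1) prime_dvd_mult_iff by blast
  qed
  have I3: "I \<subseteq> {..<3}"
  proof
    fix x assume "x \<in> I"
    then have "x < 4" "x \<noteq> 3" using I(1) \<open>3 \<notin> I\<close> by auto
    then show "x \<in> {..<3}" by simp
  qed
  define b where "b i = a i mod q" for i
  have bQ: "\<forall>i\<in>I. b i \<in> Qsq q" unfolding b_def
    using I(3) Lset_sqq[OF pr] sqq_to_Qsq[OF pr(2)] by blast
  have "[(\<Sum>i\<in>I. b i * zs!i) = (\<Sum>i\<in>I. a i * w i)] (mod q)"
  proof (rule cong_sum)
    fix i assume "i \<in> I"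
    then have "i < 3" using I3 by auto
    then have "[w i = zs!i] (mod q)" using w[of i] by simp
    moreover have "[b i = a i] (mod q)" unfolding b_def by (simp add: cong_def)
    ultimately show "[b i * zs!i = a i * w i] (mod q)" by (meson cong_mult cong_sym)
  qed
  moreover have "q dvd (\<Sum>i\<in>I. a i * w i)" using nd pr(4) dvd_mult_right by blast
  ultimately have "q dvd (\<Sum>i\<in>I. b i * zs!i)" using cong_dvd_iff by blast
  then have "(\<Sum>i\<in>I. b i * zs!i) mod q = 0" by simp
  then show ?thesis unfolding has_wzs_subseq_def
    by (intro exI[of _ I] exI[of _ b]) (use I3 I(2) bQ zs in auto)
qed

lemma Qsq_nz: assumes "prime q" "b \<in> Qsq q" shows "\<not> q dvd b"
  using Qsq_to_sqq[OF assms] sqq_ndvd[OF assms(1)] by blast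

lemma dav_Q3:
  fixes p q n :: int assumes pr: "prime p" "prime q" "p \<noteq> q" "n = p*q"
    and P4: "\<forall>xs. length xs = 4 \<and> set xs \<subseteq> Zmod n \<longrightarrow> has_wzs_subseq n (Lset n p) xs"
    and free: "set ys \<subseteq> Zmod q" "length ys = 2" "\<not> has_wzs_subseq q (Qsq q) ys"
  shows "davenport q (Qsq q) = 3"
  unfolding davenport_def
proof (rule Least_equality)
  show "\<forall>xs. length xs = 3 \<and> set xs \<subseteq> Zmod q \<longrightarrow> has_wzs_subseq q (Qsq q) xs"
    using lift_Q3[OF pr P4] by blast
next
  fix y assume Py: "\<forall>xs. length xs = y \<and> set xs \<subseteq> Zmod q \<longrightarrow> has_wzs_subseq q (Qsq q) xs"
  show "3 \<le> y"
  proof (rule ccontr)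
    assume "\<not> 3 \<le> y"
    then have "y = 0 \<or> y = 1 \<or> y = 2" by auto
    moreover have "y \<noteq> 0"
    proof
      assume "y = 0"
      then have "has_wzs_subseq q (Qsq q) []" using Py by auto
      then show False unfolding has_wzs_subseq_def by auto
    qed
    moreover have "y \<noteq> 2" using Py free by auto
    moreover have "y \<noteq> 1"
    proof
      assume "y = 1"
      moreover have "set [1] \<subseteq> Zmod q" unfolding Zmod_def using pr(2) prime_gt_1_int by auto
      ultimately have "has_wzs_subseq q (Qsq q) [1]" using Py by (metis length_Cons list.size(3) One_nat_def)
      then obtain I a where I: "I \<subseteq> {..<length [1::int]}" "I \<noteq> {}" "\<forall>i\<in>I. a i \<in> Qsq q"
        "(\<Sum>i\<in>I. a i * [1::int]!i) mod q = 0" unfolding has_wzs_subseq_def by (elim exE conjE) (rule that; assumption)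
      have "I = {0}" using I(1,2) by auto
      then have "a 0 \<in> Qsq q" "a 0 mod q = 0" using I(3,4) by auto
      then show False using Qsq_nz[OF pr(2)] by auto
    qed
    ultimately show False by blast
  qed
qed


lemma solve_p:
  fixes p :: int and xs :: "int list"
  assumes "prime p" "p \<noteq> 2" "length xs = 3" "J \<subseteq> {..<3}"
    and "card {i\<in>J. \<not> p dvd xs!i} \<noteq> 1"
  shows "\<exists>\<alpha>. (\<forall>i\<in>J. \<not> p dvd \<alpha> i) \<and> p dvd (\<Sum>i\<in>J. \<alpha> i * xs!i)"
proof -
  define K where "K = {i\<in>J. \<not> p dvd xs!i}"
  have finJ: "finite J" using assms(4) finite_subset by blast
  have KJ: "K \<subseteq> J" unfolding K_def by auto
  have finK: "finite K" using KJ finJ finite_subset by blast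
  have split: "(\<Sum>i\<in>J. f i) = (\<Sum>i\<in>J - K. f i) + (\<Sum>i\<in>K. f i)" for f :: "nat \<Rightarrow> int"
    using sum.subset_diff[OF KJ finJ] by simp
  have rest: "p dvd (\<Sum>i\<in>J - K. f i * xs!i)" for f
    by (rule dvd_sum) (auto simp: K_def)
  have "card K \<le> 3" using card_mono[OF _ order.trans[OF KJ assms(4)]] by fastforce
  then have "card K = 0 \<or> card K = 2 \<or> card K = 3" using assms(5) unfolding K_def by auto
  moreover
  { assume "card K = 0"
    then have "K = {}" using finK by simp
    then have ?thesis using rest[of "\<lambda>_. 1"] split[of "\<lambda>i. 1 * xs!i"]
      using prime_gt_1_int[OF assms(1)] by (intro exI[of _ "\<lambda>_. 1"]) auto }
  moreover
  { assume "card K = 2"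
    then obtain i j where ij: "K = {i,j}" "i \<noteq> j" by (meson card_2_iff)
    define \<alpha> where "\<alpha> l = (if l = i then xs!j else if l = j then - (xs!i) else 1)" for l
    have "(\<Sum>l\<in>K. \<alpha> l * xs!l) = 0" unfolding ij(1) \<alpha>_def using ij(2) by simp
    then have "p dvd (\<Sum>l\<in>J. \<alpha> l * xs!l)" using rest[of \<alpha>] split[of "\<lambda>l. \<alpha> l * xs!l"] by simp
    moreover have "\<forall>l\<in>J. \<not> p dvd \<alpha> l"
    proof
      fix l assume "l \<in> J"
      have "i \<in> K" "j \<in> K" using ij(1) by auto
      then have ni: "\<not> p dvd xs!i" "\<not> p dvd xs!j" unfolding K_def by auto
      have n1: "\<not> p dvd 1" using prime_gt_1_int[OF assms(1)] by simp
      show "\<not> p dvd \<alpha> l"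
      proof (cases "l = i")
        case True then show ?thesis using ni unfolding \<alpha>_def by simp
      next
        case False
        then show ?thesis using ni n1 unfolding \<alpha>_def by simp
      qed
    qed
    ultimately have ?thesis by blast }
  moreover
  { assume "card K = 3"
    then have KJ3: "K = {..<3}" using card_subset_eq[OF _ order.trans[OF KJ assms(4)]] by simp
    then have J3: "J = {..<3}" using KJ assms(4) by auto
    define \<alpha> where "\<alpha> (l::nat) = (if l = 0 then xs!1 * xs!2 else if l = 1 then xs!0 * xs!2 else -2 * xs!0 * xs!1)" for l
    have "(\<Sum>l\<in>J. \<alpha> l * xs!l) = 0" unfolding J3 \<alpha>_def by (simp add: lessThan_nat_numeral algebra_simps)
    moreover have nd: "\<not> p dvd xs!l" if "l < 3" for l using KJ3 that unfolding K_def by auto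
    have n2: "\<not> p dvd 2"
    proof
      assume "p dvd 2"
      then have "p \<le> 2" by (simp add: zdvd_imp_le)
      then show False using assms(1,2) prime_ge_2_int[of p] by simp
    qed
    have "\<forall>l\<in>J. \<not> p dvd \<alpha> l"
    proof
      fix l assume "l \<in> J"
      then have "l = 0 \<or> l = 1 \<or> l = 2" using J3 by auto
      moreover have "\<not> p dvd xs!1 * xs!2" using nd[of 1] nd[of 2] prime_dvd_mult_iff[OF assms(1)] by simp
      moreover have "\<not> p dvd xs!0 * xs!2" using nd[of 0] nd[of 2] prime_dvd_mult_iff[OF assms(1)] by simp
      moreover have "\<not> p dvd -2 * xs!0 * xs!1"
        using nd[of 0] nd[of 1] n2 prime_dvd_mult_iff[OF assms(1)] by (simp only: dvd_minus_iff mult_minus_left) simp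
      ultimately show "\<not> p dvd \<alpha> l" unfolding \<alpha>_def by auto
    qed
    ultimately have ?thesis by (intro exI[of _ \<alpha>]) simp }
  ultimately show ?thesis by blast
qed

lemma contra:
  fixes p q n :: int and xs :: "int list"
  assumes pr: "prime p" "prime q" "p \<noteq> q" "n = p*q" "p \<noteq> 2"
    and "length xs = 3" "J \<subseteq> {..<3}" "J \<noteq> {}"
    and "card {i\<in>J. \<not> p dvd xs!i} \<noteq> 1"
    and "\<forall>i\<in>J. sqq q (\<beta> i)" "q dvd (\<Sum>i\<in>J. \<beta> i * xs!i)"
  shows "has_wzs_subseq n (Lset n p) xs"
proof -
  obtain \<alpha> where al: "\<forall>i\<in>J. \<not> p dvd \<alpha> i" "p dvd (\<Sum>i\<in>J. \<alpha> i * xs!i)"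
    using solve_p[OF pr(1,5) assms(6,7,9)] by blast
  have "J \<subseteq> {..<length xs}" using assms(6,7) by simp
  from combine[OF pr(1-4) this assms(8) al(1) assms(10) al(2) assms(11)] show ?thesis .
qed

lemma DS:
  fixes q x :: int assumes "prime q" "q \<ge> 7" "\<not> q dvd x"
  shows "\<exists>A B C. \<not> q dvd A \<and> \<not> q dvd B \<and> \<not> q dvd C \<and> B^2 - A^2 = C^2 * x"
proof -
  have small: "\<not> q dvd d" if "0 < d" "d < 7" for d :: int
  proof
    assume "q dvd d"
    then have "q \<le> d" using that(1) by (simp add: zdvd_imp_le)
    then show False using that assms(2) by linarith
  qed
  have gen: "\<exists>A B C. \<not> q dvd A \<and> \<not> q dvd B \<and> \<not> q dvd C \<and> B^2 - A^2 = C^2 * x"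
    if "\<not> q dvd (x - s^2)" "\<not> q dvd (x + s^2)" "0 < s" "s \<le> 3" for s :: int
  proof -
    have "\<not> q dvd (2*s)" using small[of "2*s"] that by simp
    moreover have "(x + s^2)^2 - (x - s^2)^2 = (2*s)^2 * x" by (simp add: algebra_simps power2_eq_square)
    ultimately show ?thesis using that by blast
  qed
  have n8: "\<not> q dvd 8"
  proof
    assume "q dvd 8"
    then have "q dvd 2^3" by simp
    then have "q dvd 2" using assms(1) prime_dvd_power_int by blast
    then show False using small[of 2] by simp
  qed
  have pair: "\<not> (q dvd a \<and> q dvd b)" if "a - b = d" "\<not> q dvd d" for a b d :: int
    using that dvd_diff by blast
  have p1: "\<not> (q dvd (x - 1) \<and> q dvd (x - 4))" by (rule pair[of _ _ 3]) (use small[of 3] in auto)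
  have p2: "\<not> (q dvd (x + 4) \<and> q dvd (x + 1))" by (rule pair[of _ _ 3]) (use small[of 3] in auto)
  have p3: "\<not> (q dvd (x - 1) \<and> q dvd (x - 9))" by (rule pair[of _ _ 8]) (use n8 in auto)
  have p4: "\<not> (q dvd (x + 9) \<and> q dvd (x + 1))" by (rule pair[of _ _ 8]) (use n8 in auto)
  have p5: "\<not> (q dvd (x - 4) \<and> q dvd (x - 9))" by (rule pair[of _ _ 5]) (use small[of 5] in auto)
  have p6: "\<not> (q dvd (x + 9) \<and> q dvd (x + 4))" by (rule pair[of _ _ 5]) (use small[of 5] in auto)
  have g1: "\<not> q dvd (x - 1) \<Longrightarrow> \<not> q dvd (x + 1) \<Longrightarrow> ?thesis" using gen[of 1] by simp
  have g2: "\<not> q dvd (x - 4) \<Longrightarrow> \<not> q dvd (x + 4) \<Longrightarrow> ?thesis" using gen[of 2] by simp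
  have g3: "\<not> q dvd (x - 9) \<Longrightarrow> \<not> q dvd (x + 9) \<Longrightarrow> ?thesis" using gen[of 3] by simp
  consider "\<not> q dvd (x - 1) \<and> \<not> q dvd (x + 1)" | "\<not> q dvd (x - 4) \<and> \<not> q dvd (x + 4)"
     | "\<not> q dvd (x - 9) \<and> \<not> q dvd (x + 9)"
    using p1 p2 p3 p4 p5 p6 by blast
  then show ?thesis
  proof cases
    case 1 then show ?thesis using g1 by blast
  next
    case 2 then show ?thesis using g2 by blast
  next
    case 3 then show ?thesis using g3 by blast
  qed
qed

lemma pair_unpack:
  fixes q u v :: int assumes "prime q" "\<not> q dvd u" "\<not> q dvd v"
    and "has_wzs_subseq q (Qsq q) [u mod q, v mod q]"
  shows "\<exists>b c. sqq q b \<and> sqq q c \<and> q dvd (b*u + c*v)"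
proof -
  obtain I a where I: "I \<subseteq> {..<length [u mod q, v mod q]}" "I \<noteq> {}" "\<forall>i\<in>I. a i \<in> Qsq q"
    "(\<Sum>i\<in>I. a i * [u mod q, v mod q]!i) mod q = 0"
    using assms(4) unfolding has_wzs_subseq_def by (elim exE conjE) (rule that; assumption)
  have I01: "I \<subseteq> {0,1}" using I(1) by auto
  have sq: "sqq q (a i)" "\<not> q dvd a i" if "i \<in> I" for i
    using Qsq_to_sqq[OF assms(1)] Qsq_nz[OF assms(1)] I(3) that by auto
  have "[(\<Sum>i\<in>I. a i * [u mod q, v mod q]!i) = (\<Sum>i\<in>I. a i * [u, v]!i)] (mod q)"
  proof (rule cong_sum)
    fix i assume "i \<in> I"
    then have "i = 0 \<or> i = 1" using I01 by auto
    then show "[a i * [u mod q, v mod q]!i = a i * [u, v]!i] (mod q)"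
      by (auto simp: cong_def mod_mult_right_eq)
  qed
  then have dv: "q dvd (\<Sum>i\<in>I. a i * [u, v]!i)" using I(4) cong_dvd_iff by (metis dvd_eq_mod_eq_0)
  consider "I = {0}" | "I = {1}" | "I = {0,1}" using I01 I(2) by blast
  then show ?thesis
  proof cases
    case 1
    then have "q dvd a 0 * u" using dv by simp
    then have "q dvd a 0 \<or> q dvd u" using prime_dvd_mult_iff[OF assms(1)] by blast
    then have False using sq(2)[of 0] 1 assms(2) by auto
    then show ?thesis ..
  next
    case 2
    then have "q dvd a 1 * v" using dv by simp
    then have "q dvd a 1 \<or> q dvd v" using prime_dvd_mult_iff[OF assms(1)] by blast
    then have False using sq(2)[of 1] 2 assms(3) by auto
    then show ?thesis ..
  next
    case 3
    then have "q dvd a 0 * u + a 1 * v" using dv by simp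
    then show ?thesis using sq[of 0] sq[of 1] 3 by blast
  qed
qed

lemma others3:
  fixes k :: nat assumes "k < 3"
  shows "\<exists>i j. i < 3 \<and> j < 3 \<and> i \<noteq> j \<and> i \<noteq> k \<and> j \<noteq> k"
proof -
  have "k = 0 \<or> k = 1 \<or> k = 2" using assms by auto
  then show ?thesis by (metis One_nat_def lessI numeral_2_eq_2 numeral_3_eq_3 zero_less_Suc less_SucI n_not_Suc_n zero_neq_numeral Suc_n_not_n)
qed

lemma all3:
  fixes k i j l :: nat assumes "k < 3" "i < 3" "j < 3" "k \<noteq> i" "k \<noteq> j" "i \<noteq> j" "l < 3"
  shows "l = k \<or> l = i \<or> l = j"
  using assms by auto

lemma sqq1: "prime q \<Longrightarrow> sqq q 1"
  unfolding sqq_def by (rule exI[of _ 1]) (use prime_gt_1_int[of q] in simp)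

lemma main_case:
  fixes p q n :: int and xs :: "int list"
  assumes pr: "prime p" "prime q" "p \<noteq> q" "n = p*q" "p \<noteq> 2" "q \<ge> 7"
    and len: "length xs = 3" and nz: "\<not> has_wzs_subseq n (Lset n p) xs"
    and PQ3: "\<forall>zs. length zs = 3 \<longrightarrow> has_wzs_subseq q (Qsq q) zs"
  shows "\<exists>k i j. k < 3 \<and> i < 3 \<and> j < 3 \<and> k \<noteq> i \<and> k \<noteq> j \<and> i \<noteq> j \<and>
     \<not> has_wzs_subseq q (Qsq q) [xs!i mod q, xs!j mod q] \<and>
     ((q dvd xs!k \<and> \<not> q dvd xs!i \<and> \<not> q dvd xs!j \<and> \<not> p dvd xs!k) \<or>
      (\<not> p dvd xs!k \<and> p dvd xs!i \<and> p dvd xs!j))"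
proof -
  have C: False if "J \<subseteq> {..<3}" "J \<noteq> {}" "card {i\<in>J. \<not> p dvd xs!i} \<noteq> 1"
     "\<forall>i\<in>J. sqq q (\<beta> i)" "q dvd (\<Sum>i\<in>J. \<beta> i * xs!i)" for J \<beta>
    using contra[OF pr(1-5) len that] nz by blast
  have s1: "sqq q 1" using sqq1 pr(2) .
  have nPQ: False if "i < 3" "p dvd xs!i" "q dvd xs!i" for i
  proof -
    have e: "{l\<in>{i}. \<not> p dvd xs!l} = {}" using that by auto
    have cd: "card {l\<in>{i}. \<not> p dvd xs!l} \<noteq> 1" unfolding e by simp
    show False using C[OF _ _ cd, of "\<lambda>_. 1"] that s1 by auto
  qed
  have A: False if "i < 3" "j < 3" "i \<noteq> j" "q dvd xs!i" "q dvd xs!j" for i j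
  proof -
    have "{l\<in>{i,j}. \<not> p dvd xs!l} = {i,j}" using that nPQ by auto
    then have "card {l\<in>{i,j}. \<not> p dvd xs!l} = 2" using that(3) by simp
    then have cd: "card {l\<in>{i,j}. \<not> p dvd xs!l} \<noteq> 1" by simp
    have "q dvd (\<Sum>l\<in>{i,j}. 1 * xs!l)" using that by simp
    then show False using C[OF _ _ cd, of "\<lambda>_. 1"] that s1 by auto
  qed
  show ?thesis
  proof (cases "\<exists>k<3. q dvd xs!k")
    case True
    then obtain k where k: "k < 3" "q dvd xs!k" by blast
    obtain i j where ij: "i < 3" "j < 3" "i \<noteq> j" "i \<noteq> k" "j \<noteq> k" using others3[OF k(1)] by blast
    have nqi: "\<not> q dvd xs!i" using A[of i k] ij k by auto
    have nqj: "\<not> q dvd xs!j" using A[of j k] ij k by auto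
    have npk: "\<not> p dvd xs!k" using nPQ k by blast
    have free: "\<not> has_wzs_subseq q (Qsq q) [xs!i mod q, xs!j mod q]"
    proof
      assume "has_wzs_subseq q (Qsq q) [xs!i mod q, xs!j mod q]"
      then obtain b c where bc: "sqq q b" "sqq q c" "q dvd (b * xs!i + c * xs!j)"
        using pair_unpack[OF pr(2) nqi nqj] by blast
      show False
      proof (cases "p dvd xs!i \<longleftrightarrow> p dvd xs!j")
        case True
        define \<beta> where "\<beta> l = (if l = i then b else c)" for l
        have "card {l\<in>{i,j}. \<not> p dvd xs!l} \<noteq> 1"
        proof (cases "p dvd xs!i")
          case True
          then have e: "{l\<in>{i,j}. \<not> p dvd xs!l} = {}" using \<open>p dvd xs!i \<longleftrightarrow> p dvd xs!j\<close> by auto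
          show ?thesis unfolding e by simp
        next
          case False
          then have "{l\<in>{i,j}. \<not> p dvd xs!l} = {i,j}" using \<open>p dvd xs!i \<longleftrightarrow> p dvd xs!j\<close> by auto
          then show ?thesis using ij(3) by simp
        qed
        moreover have "q dvd (\<Sum>l\<in>{i,j}. \<beta> l * xs!l)" using bc ij(3) unfolding \<beta>_def by simp
        moreover have "\<forall>l\<in>{i,j}. sqq q (\<beta> l)" using bc unfolding \<beta>_def by auto
        moreover have "{i,j} \<subseteq> {..<3}" using ij by auto
        ultimately show False using C[of "{i,j}" \<beta>] by blast
      next
        case False
        define \<beta> where "\<beta> l = (if l = i then b else if l = j then c else 1)" for l
        note nb = False
        have "card {l\<in>{k,i,j}. \<not> p dvd xs!l} = 2"
        proof (cases "p dvd xs!i")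
          case True
          then have "\<not> p dvd xs!j" using nb by blast
          then have "{l\<in>{k,i,j}. \<not> p dvd xs!l} = {k,j}" using True npk by auto
          then show ?thesis using ij by simp
        next
          case False
          then have "p dvd xs!j" using nb by blast
          then have "{l\<in>{k,i,j}. \<not> p dvd xs!l} = {k,i}" using False npk by auto
          then show ?thesis using ij by simp
        qed
        then have "card {l\<in>{k,i,j}. \<not> p dvd xs!l} \<noteq> 1" by simp
        moreover have "q dvd (\<Sum>l\<in>{k,i,j}. \<beta> l * xs!l)"
        proof -
          have "(\<Sum>l\<in>{k,i,j}. \<beta> l * xs!l) = xs!k + (b * xs!i + c * xs!j)"
            using ij unfolding \<beta>_def by simp
          then show ?thesis using bc(3) k(2) by simp
        qed
        moreover have "\<forall>l\<in>{k,i,j}. sqq q (\<beta> l)" using bc s1 unfolding \<beta>_def by auto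
        moreover have "{k,i,j} \<subseteq> {..<3}" using ij k by auto
        ultimately show False using C[of "{k,i,j}" \<beta>] by blast
      qed
    qed
    show ?thesis using k ij nqi nqj npk free by blast
  next
    case False
    then have nq: "\<not> q dvd xs!l" if "l < 3" for l using that by blast
    define zs where "zs = [xs!0 mod q, xs!1 mod q, xs!2 mod q]"
    have "has_wzs_subseq q (Qsq q) zs" using PQ3 unfolding zs_def by simp
    then obtain I a where I: "I \<subseteq> {..<length zs}" "I \<noteq> {}" "\<forall>i\<in>I. a i \<in> Qsq q"
      "(\<Sum>i\<in>I. a i * zs!i) mod q = 0" unfolding has_wzs_subseq_def by (elim exE conjE) (rule that; assumption)
    have lz: "length zs = 3" unfolding zs_def by simp
    have I3: "I \<subseteq> {..<3}" using I(1) unfolding lz .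
    have sa: "sqq q (a i)" "\<not> q dvd a i" if "i \<in> I" for i
      using Qsq_to_sqq[OF pr(2)] Qsq_nz[OF pr(2)] I(3) that by auto
    have "[(\<Sum>i\<in>I. a i * zs!i) = (\<Sum>i\<in>I. a i * xs!i)] (mod q)"
    proof (rule cong_sum)
      fix i assume "i \<in> I"
      then have "i = 0 \<or> i = 1 \<or> i = 2" using I3 by auto
      then show "[a i * zs!i = a i * xs!i] (mod q)"
        unfolding zs_def by (auto simp: cong_def mod_mult_right_eq)
    qed
    then have dI: "q dvd (\<Sum>i\<in>I. a i * xs!i)" using I(4) cong_dvd_iff by (metis dvd_eq_mod_eq_0)
    define K where "K = {i\<in>I. \<not> p dvd xs!i}"
    have "card K = 1"
    proof (rule ccontr)
      assume "card K \<noteq> 1"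
      then show False using C[of I a] I3 I(2) sa dI unfolding K_def by blast
    qed
    then obtain k where kK: "K = {k}" using card_1_singletonE by blast
    have kI: "k \<in> I" "\<not> p dvd xs!k" using kK unfolding K_def by auto
    have k3: "k < 3" using kI I3 by auto
    obtain i j where ij: "i < 3" "j < 3" "i \<noteq> j" "i \<noteq> k" "j \<noteq> k" using others3[OF k3] by blast
    show ?thesis
    proof (cases "p dvd xs!i \<and> p dvd xs!j")
      case True
      have free: "\<not> has_wzs_subseq q (Qsq q) [xs!i mod q, xs!j mod q]"
      proof
        assume "has_wzs_subseq q (Qsq q) [xs!i mod q, xs!j mod q]"
        then obtain b c where bc: "sqq q b" "sqq q c" "q dvd (b * xs!i + c * xs!j)"
          using pair_unpack[OF pr(2) nq[OF ij(1)] nq[OF ij(2)]] by blast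
        define \<beta> where "\<beta> l = (if l = i then b else c)" for l
        have e: "{l\<in>{i,j}. \<not> p dvd xs!l} = {}" using True by auto
        have "card {l\<in>{i,j}. \<not> p dvd xs!l} \<noteq> 1" unfolding e by simp
        moreover have "q dvd (\<Sum>l\<in>{i,j}. \<beta> l * xs!l)" using bc ij(3) unfolding \<beta>_def by simp
        moreover have "\<forall>l\<in>{i,j}. sqq q (\<beta> l)" using bc unfolding \<beta>_def by auto
        moreover have "{i,j} \<subseteq> {..<3}" using ij by auto
        ultimately show False using C[of "{i,j}" \<beta>] by blast
      qed
      show ?thesis using kI k3 ij True free by blast
    next
      case False
      then obtain m j' where mj: "m < 3" "j' < 3" "m \<noteq> j'" "m \<noteq> k" "j' \<noteq> k" "\<not> p dvd xs!j'"
        using ij by blast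
      have j'I: "j' \<notin> I" using mj kK unfolding K_def by auto
      have "I \<noteq> {k}"
      proof
        assume "I = {k}"
        then have "q dvd a k * xs!k" using dI by simp
        then show False using sa[OF kI(1)] nq[OF k3] pr(2) prime_dvd_mult_iff by blast
      qed
      then have mI: "m \<in> I"
        using I3 kI(1) j'I all3[OF k3 mj(1) mj(2) mj(4)[symmetric] mj(5)[symmetric] mj(3)] by blast
      have pm: "p dvd xs!m" using mI kK mj(4) unfolding K_def by auto
      have Ikm: "I = {k, m}"
        using I3 kI(1) mI j'I all3[OF k3 mj(1) mj(2) mj(4)[symmetric] mj(5)[symmetric] mj(3)] by blast
      have eq1: "q dvd (a k * xs!k + a m * xs!m)" using dI mj(4) unfolding Ikm by simp
      then obtain t1 where t1: "a k * xs!k + a m * xs!m = q * t1" by blast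
      define x where "x = - (a k * xs!k * xs!j')"
      have nqx: "\<not> q dvd x"
        using sa[OF kI(1)] nq[OF k3] nq[OF mj(2)] pr(2) unfolding x_def
        by (simp add: prime_dvd_mult_iff)
      obtain AA BB CC where ABC: "\<not> q dvd AA" "\<not> q dvd BB" "\<not> q dvd CC" "BB^2 - AA^2 = CC^2 * x"
        using DS[OF pr(2) pr(6) nqx] by blast
      define \<beta> where "\<beta> l = (if l = k then a k * BB^2 else if l = m then a m * AA^2
                             else (CC * a k * xs!k)^2)" for l
      have "{l\<in>{k,m,j'}. \<not> p dvd xs!l} = {k,j'}" using kI(2) pm mj(6) by auto
      then have "card {l\<in>{k,m,j'}. \<not> p dvd xs!l} = 2" using mj by simp
      then have "card {l\<in>{k,m,j'}. \<not> p dvd xs!l} \<noteq> 1" by simp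
      moreover have "\<forall>l\<in>{k,m,j'}. sqq q (\<beta> l)"
      proof -
        have "sqq q (a k * BB^2)" using sqq_mult[OF pr(2) sa(1)[OF kI(1)] sqq_sq[OF ABC(2)]] .
        moreover have "sqq q (a m * AA^2)" using sqq_mult[OF pr(2) sa(1)[OF mI] sqq_sq[OF ABC(1)]] .
        moreover have "\<not> q dvd (CC * a k * xs!k)"
          using ABC(3) sa(2)[OF kI(1)] nq[OF k3] pr(2) by (simp add: prime_dvd_mult_iff)
        then have "sqq q ((CC * a k * xs!k)^2)" by (rule sqq_sq)
        ultimately show ?thesis unfolding \<beta>_def by auto
      qed
      moreover have "q dvd (\<Sum>l\<in>{k,m,j'}. \<beta> l * xs!l)"
      proof -
        have "(\<Sum>l\<in>{k,m,j'}. \<beta> l * xs!l) =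
              a k * BB^2 * xs!k + (a m * AA^2 * xs!m + (CC * a k * xs!k)^2 * xs!j')"
          using mj unfolding \<beta>_def by simp
        also have "\<dots> = a k * xs!k * (BB^2 - AA^2) + AA^2 * (a k * xs!k + a m * xs!m)
                        + (CC * a k * xs!k)^2 * xs!j'"
          by (simp add: algebra_simps power2_eq_square)
        also have "\<dots> = a k * xs!k * (CC^2 * x) + AA^2 * (q * t1) + (CC * a k * xs!k)^2 * xs!j'"
          using ABC(4) t1 by simp
        also have "\<dots> = q * (AA^2 * t1)"
          unfolding x_def by (simp add: algebra_simps power2_eq_square)
        finally show ?thesis by simp
      qed
      moreover have "{k,m,j'} \<subseteq> {..<3}" using k3 mj by auto
      ultimately have False using C[of "{k,m,j'}" \<beta>] by blast
      then show ?thesis by blast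
    qed
  qed
qed

theorem theorem5p5:
  fixes p' q n x1 x2 x3 :: int
  assumes "prime p'" and "prime q" and "p' \<noteq> q" and "p' \<ge> 7" and "q \<ge> 7"
    and "n = p' * q"
    and "A = Lset n p'"
    and "extremal n A [x1, x2, x3]"
  shows "\<exists>y1 y2 y3. equiv_wrt n A [x1, x2, x3] [y1, y2, y3] \<and>
     ((q dvd y1 \<and> \<not> q dvd y2 \<and> \<not> q dvd y3 \<and> y1 \<noteq> 0 \<and>
        extremal q (Qsq q) [y2 mod q, y3 mod q])
    \<or> (coprime y1 p' \<and> \<not> coprime y2 p' \<and> \<not> coprime y3 p' \<and>
        extremal q (Qsq q) [y2 mod q, y3 mod q]))"
proof -
  define xs where "xs = [x1, x2, x3]"
  have pr: "prime p'" "prime q" "p' \<noteq> q" "n = p' * q" using assms by auto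
  have p2: "p' \<noteq> 2" using assms(4) by auto
  have np: "n > 0" using pr prime_gt_0_int by simp
  have ext: "set xs \<subseteq> Zmod n" "length xs = davenport n A - 1" "\<not> has_wzs_subseq n A xs"
    using assms(8) unfolding extremal_def xs_def by auto
  have len: "length xs = 3" unfolding xs_def by simp
  have D4: "davenport n A = 4" using ext(2) len by simp
  have "7 * 7 \<le> p' * q" using assms(4,5) by (intro mult_mono) auto
  then have n1: "1 < n" using pr(4) by simp
  have qr1: "QuadRes q 1" unfolding QuadRes_def by (rule exI[of _ 1]) simp
  have "\<not> p' dvd 1" "\<not> q dvd 1" using prime_gt_1_int[of p'] prime_gt_1_int[of q] pr by auto
  then have one: "1 \<in> Lset n p'"
    using Lset_iff[OF pr, of 1] n1 qr1 by simp
  have "\<forall>xs. length xs = davenport n A \<and> set xs \<subseteq> Zmod n \<longrightarrow> has_wzs_subseq n A xs"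
    using dav_P[OF exI, OF prefix_P[OF np]] one assms(7) by blast
  then have P4: "\<forall>xs. length xs = 4 \<and> set xs \<subseteq> Zmod n \<longrightarrow> has_wzs_subseq n (Lset n p') xs"
    using D4 assms(7) by simp
  have PQ3: "\<forall>zs. length zs = 3 \<longrightarrow> has_wzs_subseq q (Qsq q) zs"
    using lift_Q3[OF pr P4] by blast
  obtain k i j where kij: "k < 3" "i < 3" "j < 3" "k \<noteq> i" "k \<noteq> j" "i \<noteq> j"
     and free: "\<not> has_wzs_subseq q (Qsq q) [xs!i mod q, xs!j mod q]"
     and cases: "(q dvd xs!k \<and> \<not> q dvd xs!i \<and> \<not> q dvd xs!j \<and> \<not> p' dvd xs!k) \<or>
      (\<not> p' dvd xs!k \<and> p' dvd xs!i \<and> p' dvd xs!j)"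
    using main_case[OF pr p2 assms(5) len _ PQ3] ext(3) assms(7) by blast
  define ys where "ys = [xs!k, xs!i, xs!j]"
  have qpos: "q > 0" using pr(2) prime_gt_0_int by blast
  have zq: "set [xs!i mod q, xs!j mod q] \<subseteq> Zmod q" unfolding Zmod_def using qpos by auto
  have DQ: "davenport q (Qsq q) = 3" using dav_Q3[OF pr P4 zq _ free] by simp
  have extQ: "extremal q (Qsq q) [xs!i mod q, xs!j mod q]"
    unfolding extremal_def using zq DQ free by simp
  have l3: "l = k \<or> l = i \<or> l = j" if "l < 3" for l using all3[OF kij that] .
  define \<sigma> where "\<sigma> l = (if l = k then (0::nat) else if l = i then 1 else 2)" for l
  have inj: "inj_on \<sigma> {..<3}"
  proof (rule inj_onI)
    fix a b assume "a \<in> {..<3::nat}" "b \<in> {..<3::nat}" "\<sigma> a = \<sigma> b"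
    then show "a = b" using l3[of a] l3[of b] kij unfolding \<sigma>_def by (auto split: if_splits)
  qed
  have img: "\<sigma> ` {..<3} \<subseteq> {..<3}" unfolding \<sigma>_def by auto
  have bij: "bij_betw \<sigma> {..<3} {..<3}"
    unfolding bij_betw_def using inj endo_inj_surj[OF _ img inj] by simp
  have xsr: "0 \<le> xs!l \<and> xs!l < n" if "l < 3" for l
    using ext(1) that len unfolding Zmod_def by (metis atLeastLessThan_iff nth_mem subsetD)
  have h1: "length xs = length ys" unfolding ys_def len by simp
  have h2: "\<forall>l<length xs. (\<lambda>_. 1::int) l \<in> A" using one assms(7) by simp
  have h3: "(1::int) \<in> units_mod n" unfolding units_mod_def using n1 by simp
  have h4: "bij_betw \<sigma> {..<length xs} {..<length xs}" using bij len by simp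
  have h5: "\<forall>l<length xs. ys ! (\<sigma> l) = (1 * (\<lambda>_. 1::int) l * xs ! l) mod n"
  proof (intro allI impI)
    fix l assume "l < length xs"
    then have l: "l < 3" using len by simp
    have "ys ! \<sigma> l = xs!l" using l3[OF l] kij unfolding ys_def \<sigma>_def by auto
    then show "ys ! (\<sigma> l) = (1 * (\<lambda>_. 1::int) l * xs ! l) mod n" using xsr[OF l] by simp
  qed
  have eqv: "equiv_wrt n A xs ys"
    unfolding equiv_wrt_def
    apply (rule conjI[OF h1])
    apply (rule exI[of _ "\<lambda>_. 1::int"], rule exI[of _ "1::int"], rule exI[of _ \<sigma>])
    using h2 h3 h4 h5 by blast
  have cop: "coprime a p' \<longleftrightarrow> \<not> p' dvd a" for a using coprime_prime_iff[OF pr(1)] by blast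
  show ?thesis
  proof (rule exI[of _ "xs!k"], rule exI[of _ "xs!i"], rule exI[of _ "xs!j"], rule conjI)
    show "equiv_wrt n A [x1, x2, x3] [xs!k, xs!i, xs!j]" using eqv unfolding ys_def by (simp only: xs_def)
    show "(q dvd xs!k \<and> \<not> q dvd xs!i \<and> \<not> q dvd xs!j \<and> xs!k \<noteq> 0 \<and>
        extremal q (Qsq q) [xs!i mod q, xs!j mod q]) \<or>
      (coprime (xs!k) p' \<and> \<not> coprime (xs!i) p' \<and> \<not> coprime (xs!j) p' \<and>
        extremal q (Qsq q) [xs!i mod q, xs!j mod q])"
      using cases
    proof
      assume h: "q dvd xs!k \<and> \<not> q dvd xs!i \<and> \<not> q dvd xs!j \<and> \<not> p' dvd xs!k"
      then have "xs!k \<noteq> 0" by auto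
      then show ?thesis using h extQ by (intro disjI1) simp
    next
      assume h: "\<not> p' dvd xs!k \<and> p' dvd xs!i \<and> p' dvd xs!j"
      then have "coprime (xs!k) p'" "\<not> coprime (xs!i) p'" "\<not> coprime (xs!j) p'"
        using cop by simp_all
      then show ?thesis using extQ by (intro disjI2) simp
    qed
  qed
qed

end
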